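(* Consider the subclass of SCMs in $\mathcal{M}$ that have a set of endogenous variables $Z$ such that $Y\perp\!\!\!\perp\{D,\Theta\}\mid X,Z$ and for which $\mathbb{P}(X,Z\mid\mathrm{do}(D=d,\Theta=\theta))\ll\mathbb{P}(X,Z\mid\mathrm{do}(D=d',\Theta=\theta'))$ for all $d,d',\theta,\theta'$. In this subclass: (T1) The deployment effect $\tau(\theta)$ is identifiable from $\{\mathbb{P}(X,Y,Z\mid\mathrm{do}(D=0)),\ \mathbb{P}(X,Z\mid\mathrm{do}(D=1,\Theta=\theta))\}$ via $$\tau(\theta)=\mathbb{E}\big[\mathbb{E}[Y\mid X,Z,\mathrm{do}(D=0)]\,\big|\,\mathrm{do}(D=1,\Theta=\theta)\big]-\mathbb{E}[Y\mid\mathrm{do}(D=0)],$$ and from $\{\mathbb{P}(X,Y,Z\mid\mathrm{do}(D=1,\Theta=\theta)),\ \mathbb{P}(X,Z\mid\mathrm{do}(D=0))\}$ via $$\tau(\theta)=\mathbb{E}[Y\mid\mathrm{do}(D=1,\Theta=\theta)]-\mathbb{E}\big[\mathbb{E}[Y\mid X,Z,\mathrm{do}(D=1,\Theta=\theta)]\,\big|\,\mathrm{do}(D=0)\big].$$ (T2) The retraining effect $\rho(\theta_{t+1},\theta_t)$ is identifiable from $\{\mathbb{P}(X,Y,Z\mid\mathrm{do}(D=1,\Theta=\theta_t)),\ \mathbb{P}(X,Z\mid\mathrm{do}(D=1,\Theta=\theta_{t+1}))\}$ via $$\rho(\theta_{t+1},\theta_t)=\mathbb{E}\big[\mathbb{E}[Y\mid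 X,Z,\mathrm{do}(D=1,\Theta=\theta_t)]\,\big|\,\mathrm{do}(D=1,\Theta=\theta_{t+1})\big]-\mathbb{E}[Y\mid\mathrm{do}(D=1,\Theta=\theta_t)].$$ (T3) The baseline predictor $\mathbb{E}[Y\mid X,\mathrm{do}(D=0)]$ is identifiable from $\{\mathbb{P}(X,Y,Z\mid\mathrm{do}(D=1,\Theta=\theta)),\ \mathbb{P}(X,Z\mid\mathrm{do}(D=0))\}$ via $$\mathbb{E}[Y\mid X,\mathrm{do}(D=0)]=\mathbb{E}\big[\mathbb{E}[Y\mid X,Z,\mathrm{do}(D=1,\Theta=\theta)]\,\big|\,X,\mathrm{do}(D=0)\big].$$
   Context: Setting: all variables take values in subsets of Euclidean spaces with Borel $\sigma$-algebras. Variables: features $X$ (possibly multidimensional), target $Y$ (real-valued), prediction $\hat{Y}$, and two input (non-random, externally set) variables: a domain indicator $D\in\{0,1\}$ ($D=0$: the decision support system is not deployed; $D=1$: it is deployed) and parameters $\Theta$. A structural causal model (SCM) with input variables $\{D,\Theta\}$ induces, for every value $(d,\theta)$, a distribution $\mathbb{P}(\cdot\mid\mathrm{do}(D=d,\Theta=\theta))$ on the endogenous variables, the push-forward of the independent exogenous distributions through the structural equations; $\mathbb{P}(\cdot\mid\mathrm{do}(D=0))$ denotes this distribution with $D=0$. The class $\mathcal{M}$: the set of SCMs with endogenous variables $V\supseteq\{X,\hat{Y},Y\}$, input variables $\{D,\Theta\}$, and graph $G$ such that the parents of $\hat{Y}$ are exactly $\{X,\Theta\}$, the children of $D$ equal the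 children of $\hat{Y}$, and the latent projection of $G$ onto $\{X,\hat{Y},Y,D,\Theta\}$ is a subgraph of the acyclic directed mixed graph with edges $X\to\hat{Y}$, $\Theta\to\hat{Y}$, $X\to Y$, $\hat{Y}\to Y$, $D\to Y$, $X\leftrightarrow Y$. Identifiability: a target quantity $t(M)$ is identifiable in a class from a set $s(M)$ of distributions induced by $M$ if $s(M_1)=s(M_2)\implies t(M_1)=t(M_2)$ for all $M_1,M_2$ in the class. Deployment effect: $\tau(\theta):=\mathbb{E}[Y\mid\mathrm{do}(D=1,\Theta=\theta)]-\mathbb{E}[Y\mid\mathrm{do}(D=0)]$. Retraining effect: $\rho(\theta_{t+1},\theta_t):=\mathbb{E}[Y\mid\mathrm{do}(D=1,\Theta=\theta_{t+1})]-\mathbb{E}[Y\mid\mathrm{do}(D=1,\Theta=\theta_t)]$. Baseline predictor: $\mathbb{E}[Y\mid X,\mathrm{do}(D=0)]$. The conditional independence $Y\perp\!\!\!\perp\{D,\Theta\}\mid X,Z$ between a random variable and input variables is meant in the transitional sense (e.g. implied by d-separation in the graph). $\ll$ denotes absolute continuity. *)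

theory Defs
  imports "HOL-Probability.Probability"
begin

text \<open>
  Abstract rendering of the interventional distributions induced by an SCM of the
  class considered in the paper.  For every regime we keep the joint distribution of
  the endogenous variables of interest, arranged as a point ((x, z), y) of the space
  ('x \<times> 'z) \<times> real with its Borel sigma-algebra:
    P0        = P(X, Z, Y | do(D = 0))
    P1 theta  = P(X, Z, Y | do(D = 1, Theta = theta)).
  The regime None stands for do(D=0), the regime Some theta for do(D=1, Theta=theta).
\<close>

definition regime ::
  "'a measure \<Rightarrow> ('p \<Rightarrow> 'a measure) \<Rightarrow> 'p option \<Rightarrow> 'a measure" where
  "regime P0 P1 r = (case r of None \<Rightarrow> P0 | Some th \<Rightarrow> P1 th)"

definition valid_regime :: "(('x::euclidean_space \<times> 'z::euclidean_space) \<times> real) measure \<Rightarrow> bool" where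
  "valid_regime M \<longleftrightarrow> prob_space M \<and> sets M = sets borel \<and> integrable M snd"

definition marg_XZ :: "(('x::euclidean_space \<times> 'z::euclidean_space) \<times> real) measure \<Rightarrow> ('x \<times> 'z) measure" where
  "marg_XZ M = distr M borel fst"

definition compose_kernel ::
  "(('x::euclidean_space \<times> 'z::euclidean_space) \<times> real) measure \<Rightarrow> ('x \<times> 'z \<Rightarrow> real measure)
     \<Rightarrow> (('x \<times> 'z) \<times> real) measure" where
  "compose_kernel M K = marg_XZ M \<bind> (\<lambda>w. K w \<bind> (\<lambda>y. return borel (w, y)))"

text \<open>Transitional conditional independence  Y \<bottom> {D, Theta} | X, Z :
  there is one Markov kernel P(Y | X, Z) valid in every regime (d, theta).\<close>
definition trans_CI :: "(('x::euclidean_space \<times> 'z::euclidean_space) \<times> real) measure \<Rightarrow> ('p \<Rightarrow> (('x \<times> 'z) \<times> real) measure) \<Rightarrow> bool" where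
  "trans_CI P0 P1 \<longleftrightarrow>
     (\<exists>K. K \<in> borel \<rightarrow>\<^sub>M prob_algebra borel \<and>
          (\<forall>r. regime P0 P1 r = compose_kernel (regime P0 P1 r) K))"

text \<open>P(X,Z | do(d,theta)) \<ll> P(X,Z | do(d',theta')) for all regimes.
  (Library: absolutely_continuous M N means N \<ll> M.)\<close>
definition XZ_abs_cont :: "(('x::euclidean_space \<times> 'z::euclidean_space) \<times> real) measure \<Rightarrow> ('p \<Rightarrow> (('x \<times> 'z) \<times> real) measure) \<Rightarrow> bool" where
  "XZ_abs_cont P0 P1 \<longleftrightarrow>
     (\<forall>r r'. absolutely_continuous (marg_XZ (regime P0 P1 r')) (marg_XZ (regime P0 P1 r)))"

definition in_subclass :: "(('x::euclidean_space \<times> 'z::euclidean_space) \<times> real) measure \<Rightarrow> ('p \<Rightarrow> (('x \<times> 'z) \<times> real) measure) \<Rightarrow> bool" where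
  "in_subclass P0 P1 \<longleftrightarrow>
     (\<forall>r. valid_regime (regime P0 P1 r)) \<and> trans_CI P0 P1 \<and> XZ_abs_cont P0 P1"

definition sigma_XZ :: "(('x::euclidean_space \<times> 'z::euclidean_space) \<times> real) measure" where
  "sigma_XZ = vimage_algebra UNIV fst borel"

definition sigma_X :: "(('x::euclidean_space \<times> 'z::euclidean_space) \<times> real) measure" where
  "sigma_X = vimage_algebra UNIV (\<lambda>w. fst (fst w)) borel"

definition EY :: "(('x::euclidean_space \<times> 'z::euclidean_space) \<times> real) measure \<Rightarrow> real" where
  "EY M = (\<integral>w. snd w \<partial>M)"

definition CE_Y_XZ :: "(('x::euclidean_space \<times> 'z::euclidean_space) \<times> real) measure \<Rightarrow> (('x \<times> 'z) \<times> real) \<Rightarrow> real" where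
  "CE_Y_XZ M = real_cond_exp M sigma_XZ snd"

definition CE_X :: "(('x::euclidean_space \<times> 'z::euclidean_space) \<times> real) measure \<Rightarrow> ((('x \<times> 'z) \<times> real) \<Rightarrow> real) \<Rightarrow> (('x \<times> 'z) \<times> real) \<Rightarrow> real" where
  "CE_X M f = real_cond_exp M sigma_X f"

definition deploy_effect :: "(('x::euclidean_space \<times> 'z::euclidean_space) \<times> real) measure \<Rightarrow> ('p \<Rightarrow> (('x \<times> 'z) \<times> real) measure) \<Rightarrow> 'p \<Rightarrow> real" where
  "deploy_effect P0 P1 th = EY (P1 th) - EY P0"

definition retrain_effect :: "('p \<Rightarrow> (('x::euclidean_space \<times> 'z::euclidean_space) \<times> real) measure) \<Rightarrow> 'p \<Rightarrow> 'p \<Rightarrow> real" where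
  "retrain_effect P1 th_next th_cur = EY (P1 th_next) - EY (P1 th_cur)"

end

theory Submission
  imports Defs
begin


lemma L_meas:
  fixes K :: "'a::euclidean_space \<Rightarrow> real measure"
  assumes K: "K \<in> borel \<rightarrow>\<^sub>M prob_algebra borel"
  shows "(\<lambda>v. K v \<bind> (\<lambda>y. return borel (v,y))) \<in> borel \<rightarrow>\<^sub>M subprob_algebra (borel :: ('a\<times>real) measure)"
proof -
  have K': "K \<in> borel \<rightarrow>\<^sub>M subprob_algebra borel" using K by (rule measurable_prob_algebraD)
  have "(\<lambda>x. return (borel :: ('a\<times>real) measure) (fst x, snd x)) \<in> (borel \<Otimes>\<^sub>M borel) \<rightarrow>\<^sub>M subprob_algebra borel"
    unfolding borel_prod by simp
  then show ?thesis by (intro measurable_bind[OF K'])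
qed

lemma L_distr:
  fixes K :: "'a::euclidean_space \<Rightarrow> real measure"
  assumes K: "K \<in> borel \<rightarrow>\<^sub>M prob_algebra borel"
  shows "K v \<bind> (\<lambda>y. return borel (v,y)) = distr (K v) (borel :: ('a\<times>real) measure) (Pair v)"
proof -
  have kv: "K v \<in> space (prob_algebra borel)" using K by (auto dest: measurable_space)
  then have sk: "sets (K v) = sets borel" and pk: "prob_space (K v)" by (auto simp: space_prob_algebra)
  have "space (K v) \<noteq> {}" using pk prob_space.not_empty by blast
  moreover have "Pair v \<in> K v \<rightarrow>\<^sub>M (borel :: ('a\<times>real) measure)"
    unfolding measurable_cong_sets[OF sk refl] borel_prod[symmetric] by measurable
  ultimately show ?thesis by (rule bind_return_distr')
qed

lemma Kv_facts:
  assumes K: "K \<in> borel \<rightarrow>\<^sub>M prob_algebra borel"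
  shows "sets (K v) = sets borel" "prob_space (K v)"
proof -
  have kv: "K v \<in> space (prob_algebra borel)" using K by (auto dest: measurable_space)
  then show "sets (K v) = sets borel" "prob_space (K v)" by (auto simp: space_prob_algebra)
qed

lemma nn_fub:
  fixes M :: "('a::euclidean_space \<times> real) measure" and K :: "'a \<Rightarrow> real measure"
  assumes K: "K \<in> borel \<rightarrow>\<^sub>M prob_algebra borel"
    and MK: "M = distr M borel fst \<bind> (\<lambda>v. K v \<bind> (\<lambda>y. return borel (v,y)))"
    and f: "f \<in> borel_measurable borel"
  shows "(\<integral>\<^sup>+w. f w \<partial>M) = (\<integral>\<^sup>+v. \<integral>\<^sup>+y. f (v,y) \<partial>K v \<partial>distr M borel fst)"
proof -
  let ?N = "distr M borel fst"
  let ?L = "\<lambda>v. K v \<bind> (\<lambda>y. return borel (v,y))"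
  have Lm: "?L \<in> ?N \<rightarrow>\<^sub>M subprob_algebra borel"
    using L_meas[OF K] measurable_cong_sets[OF sets_distr refl] by blast
  have "(\<integral>\<^sup>+w. f w \<partial>M) = (\<integral>\<^sup>+w. f w \<partial>(?N \<bind> ?L))"
    by (simp only: MK[symmetric])
  also have "\<dots> = (\<integral>\<^sup>+v. \<integral>\<^sup>+w. f w \<partial>?L v \<partial>?N)"
    by (rule nn_integral_bind[OF f Lm])
  also have "\<dots> = (\<integral>\<^sup>+v. \<integral>\<^sup>+y. f (v,y) \<partial>K v \<partial>?N)"
  proof (rule nn_integral_cong)
    fix v
    have sk: "sets (K v) = sets borel" using Kv_facts[OF K] by blast
    have pm: "Pair v \<in> K v \<rightarrow>\<^sub>M (borel :: ('a\<times>real) measure)"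
      unfolding measurable_cong_sets[OF sk refl] borel_prod[symmetric] by measurable
    show "(\<integral>\<^sup>+w. f w \<partial>?L v) = (\<integral>\<^sup>+y. f (v,y) \<partial>K v)"
      unfolding L_distr[OF K] by (rule nn_integral_distr[OF pm]) (simp add: f)
  qed
  finally show ?thesis .
qed

lemma inner_facts:
  fixes K :: "'a::euclidean_space \<Rightarrow> real measure" and h :: "'a \<times> real \<Rightarrow> real"
  assumes K: "K \<in> borel \<rightarrow>\<^sub>M prob_algebra borel" and h: "h \<in> borel_measurable borel"
  shows "(\<integral>\<^sup>+w. ennreal (h w) \<partial>(K v \<bind> (\<lambda>y. return borel (v,y)))) = (\<integral>\<^sup>+y. ennreal (h (v,y)) \<partial>K v)"
    "(\<integral>w. h w \<partial>(K v \<bind> (\<lambda>y. return borel (v,y)))) = (\<integral>y. h (v,y) \<partial>K v)"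
    "(\<lambda>y. h (v,y)) \<in> borel_measurable (K v)"
proof -
  have sk: "sets (K v) = sets borel" using Kv_facts[OF K] by blast
  have pm: "Pair v \<in> K v \<rightarrow>\<^sub>M (borel :: ('a\<times>real) measure)"
    unfolding measurable_cong_sets[OF sk refl] borel_prod[symmetric] by measurable
  show "(\<integral>\<^sup>+w. ennreal (h w) \<partial>(K v \<bind> (\<lambda>y. return borel (v,y)))) = (\<integral>\<^sup>+y. ennreal (h (v,y)) \<partial>K v)"
    unfolding L_distr[OF K] by (rule nn_integral_distr[OF pm]) (use h in measurable)
  show "(\<integral>w. h w \<partial>(K v \<bind> (\<lambda>y. return borel (v,y)))) = (\<integral>y. h (v,y) \<partial>K v)"
    unfolding L_distr[OF K] by (rule integral_distr[OF pm]) (simp add: h)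
  show "(\<lambda>y. h (v,y)) \<in> borel_measurable (K v)"
    using measurable_comp[OF pm h] by (simp add: comp_def)
qed

lemma bo_fub:
  fixes M :: "('a::euclidean_space \<times> real) measure" and K :: "'a \<Rightarrow> real measure"
    and f :: "'a \<times> real \<Rightarrow> real"
  assumes K: "K \<in> borel \<rightarrow>\<^sub>M prob_algebra borel"
    and MK: "M = distr M borel fst \<bind> (\<lambda>v. K v \<bind> (\<lambda>y. return borel (v,y)))"
    and f: "f \<in> borel_measurable borel"
    and fi: "integrable M f"
  shows "integrable (distr M borel fst) (\<lambda>v. \<integral>y. f (v,y) \<partial>K v)"
    "(\<integral>w. f w \<partial>M) = (\<integral>v. \<integral>y. f (v,y) \<partial>K v \<partial>distr M borel fst)"
proof -
  let ?N = "distr M borel fst"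
  let ?L = "\<lambda>v. K v \<bind> (\<lambda>y. return borel (v,y))"
  define Fp where "Fp v = (\<integral>\<^sup>+y. ennreal (f (v,y)) \<partial>K v)" for v
  define Fm where "Fm v = (\<integral>\<^sup>+y. ennreal (- f (v,y)) \<partial>K v)" for v
  define G where "G v = (\<integral>y. f (v,y) \<partial>K v)" for v
  have Lm: "?L \<in> ?N \<rightarrow>\<^sub>M subprob_algebra borel"
    using L_meas[OF K] measurable_cong_sets[OF sets_distr refl] by blast
  have fm: "(\<lambda>w. - f w) \<in> borel_measurable borel" using f by measurable
  have Fpm: "Fp \<in> borel_measurable ?N"
  proof -
    have "(\<lambda>v. \<integral>\<^sup>+w. ennreal (f w) \<partial>?L v) \<in> borel_measurable ?N"
      by (rule measurable_compose[OF Lm nn_integral_measurable_subprob_algebra]) (use f in measurable)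
    then show ?thesis unfolding Fp_def inner_facts(1)[OF K f] .
  qed
  have Fmm: "Fm \<in> borel_measurable ?N"
  proof -
    have "(\<lambda>v. \<integral>\<^sup>+w. ennreal (- f w) \<partial>?L v) \<in> borel_measurable ?N"
      by (rule measurable_compose[OF Lm nn_integral_measurable_subprob_algebra]) (use f in measurable)
    then show ?thesis unfolding Fm_def inner_facts(1)[OF K fm] .
  qed
  have Gm: "G \<in> borel_measurable ?N"
  proof -
    have "(\<lambda>v. \<integral>w. f w \<partial>?L v) \<in> borel_measurable ?N"
      by (rule measurable_compose[OF Lm integral_measurable_subprob_algebra]) (use f in measurable)
    then show ?thesis unfolding G_def inner_facts(2)[OF K f] .
  qed
  have fpf: "(\<integral>\<^sup>+w. ennreal (f w) \<partial>M) \<noteq> \<infinity>" and fmf: "(\<integral>\<^sup>+w. ennreal (- f w) \<partial>M) \<noteq> \<infinity>"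
    using fi unfolding real_integrable_def by auto
  have ip: "(\<integral>\<^sup>+w. ennreal (f w) \<partial>M) = (\<integral>\<^sup>+v. Fp v \<partial>?N)"
    unfolding Fp_def by (rule nn_fub[OF K MK]) (use f in measurable)
  have im: "(\<integral>\<^sup>+w. ennreal (- f w) \<partial>M) = (\<integral>\<^sup>+v. Fm v \<partial>?N)"
    unfolding Fm_def by (rule nn_fub[OF K MK]) (use f in measurable)
  have aep: "AE v in ?N. Fp v \<noteq> \<infinity>" using nn_integral_PInf_AE[OF Fpm] fpf ip by simp
  have aem: "AE v in ?N. Fm v \<noteq> \<infinity>" using nn_integral_PInf_AE[OF Fmm] fmf im by simp
  have aeG: "AE v in ?N. G v = enn2real (Fp v) - enn2real (Fm v)"
    using aep aem
  proof eventually_elim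
    case (elim v)
    have "integrable (K v) (\<lambda>y. f (v,y))"
      unfolding real_integrable_def using elim inner_facts(3)[OF K f] by (simp add: Fp_def Fm_def)
    then show ?case unfolding G_def Fp_def Fm_def by (rule real_lebesgue_integral_def)
  qed
  have ai: "integrable ?N (\<lambda>v. enn2real (Fp v))" and aint: "(\<integral>v. enn2real (Fp v) \<partial>?N) = enn2real (\<integral>\<^sup>+w. ennreal (f w) \<partial>M)"
  proof -
    have eq: "(\<integral>\<^sup>+v. ennreal (enn2real (Fp v)) \<partial>?N) = (\<integral>\<^sup>+v. Fp v \<partial>?N)"
      by (rule nn_integral_cong_AE) (use aep in \<open>auto simp: less_top\<close>)
    show "integrable ?N (\<lambda>v. enn2real (Fp v))"
      by (rule integrableI_nonneg) (use Fpm eq ip fpf in \<open>auto simp: less_top\<close>)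
    show "(\<integral>v. enn2real (Fp v) \<partial>?N) = enn2real (\<integral>\<^sup>+w. ennreal (f w) \<partial>M)"
      by (subst integral_eq_nn_integral) (use Fpm eq ip in auto)
  qed
  have bi: "integrable ?N (\<lambda>v. enn2real (Fm v))" and bint: "(\<integral>v. enn2real (Fm v) \<partial>?N) = enn2real (\<integral>\<^sup>+w. ennreal (- f w) \<partial>M)"
  proof -
    have eq: "(\<integral>\<^sup>+v. ennreal (enn2real (Fm v)) \<partial>?N) = (\<integral>\<^sup>+v. Fm v \<partial>?N)"
      by (rule nn_integral_cong_AE) (use aem in \<open>auto simp: less_top\<close>)
    show "integrable ?N (\<lambda>v. enn2real (Fm v))"
      by (rule integrableI_nonneg) (use Fmm eq im fmf in \<open>auto simp: less_top\<close>)
    show "(\<integral>v. enn2real (Fm v) \<partial>?N) = enn2real (\<integral>\<^sup>+w. ennreal (- f w) \<partial>M)"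
      by (subst integral_eq_nn_integral) (use Fmm eq im in auto)
  qed
  have di: "integrable ?N (\<lambda>v. enn2real (Fp v) - enn2real (Fm v))" using ai bi by auto
  show "integrable ?N (\<lambda>v. \<integral>y. f (v,y) \<partial>K v)"
    using integrable_cong_AE_imp[OF di _ AE_symmetric[OF aeG]] Gm unfolding G_def by blast
  have "(\<integral>w. f w \<partial>M) = enn2real (\<integral>\<^sup>+w. ennreal (f w) \<partial>M) - enn2real (\<integral>\<^sup>+w. ennreal (- f w) \<partial>M)"
    by (rule real_lebesgue_integral_def[OF fi])
  also have "\<dots> = (\<integral>v. enn2real (Fp v) - enn2real (Fm v) \<partial>?N)"
    using ai bi aint bint by simp
  also have "\<dots> = (\<integral>v. G v \<partial>?N)"
    by (rule integral_cong_AE) (use Fpm Fmm Gm aeG in auto)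
  finally show "(\<integral>w. f w \<partial>M) = (\<integral>v. \<integral>y. f (v,y) \<partial>K v \<partial>?N)" unfolding G_def .
qed




lemma fst_borel: "fst \<in> (borel :: ('a::second_countable_topology \<times> 'b::second_countable_topology) measure) \<rightarrow>\<^sub>M borel"
  using measurable_fst[of "borel::'a measure" "borel::'b measure"] by (simp only: borel_prod)

lemma snd_borel: "snd \<in> (borel :: ('a::second_countable_topology \<times> 'b::second_countable_topology) measure) \<rightarrow>\<^sub>M borel"
  using measurable_snd[of "borel::'a measure" "borel::'b measure"] by (simp only: borel_prod)

lemma space_borel_M: "sets M = sets borel \<Longrightarrow> space M = UNIV"
  using sets_eq_imp_space_eq by fastforce

lemma sets_XZ:
  assumes "S \<in> sets (sigma_XZ :: (('x::euclidean_space \<times> 'z::euclidean_space) \<times> real) measure)"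
  shows "\<exists>B \<in> sets borel. S = fst -` B"
  using assms unfolding sigma_XZ_def by (subst (asm) sets_vimage_algebra2) auto

lemma sub_XZ:
  fixes M :: "(('x::euclidean_space \<times> 'z::euclidean_space) \<times> real) measure"
  assumes "sets M = sets borel" shows "subalgebra M sigma_XZ"
  unfolding subalgebra_def
proof
  show "sets sigma_XZ \<subseteq> sets M"
  proof
    fix S assume "S \<in> sets (sigma_XZ :: (('x \<times> 'z) \<times> real) measure)"
    then obtain B where B: "B \<in> sets borel" "S = fst -` B" using sets_XZ by blast
    have "fst -` B \<inter> space borel \<in> sets (borel :: (('x \<times> 'z) \<times> real) measure)"
      by (rule measurable_sets[OF _ B(1)]) (rule fst_borel)
    then show "S \<in> sets M" using B assms by simp
  qed
  show "space sigma_XZ = space M" using space_borel_M[OF assms] by (simp add: sigma_XZ_def)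
qed

lemma sub_X_XZ:
  "subalgebra (sigma_XZ :: (('x::euclidean_space \<times> 'z::euclidean_space) \<times> real) measure) sigma_X"
  unfolding subalgebra_def
proof
  show "sets sigma_X \<subseteq> sets (sigma_XZ :: (('x \<times> 'z) \<times> real) measure)"
  proof
    fix S assume "S \<in> sets (sigma_X :: (('x \<times> 'z) \<times> real) measure)"
    then obtain B where B: "B \<in> sets (borel :: 'x measure)" "S = (\<lambda>w. fst (fst w)) -` B"
      unfolding sigma_X_def by (subst (asm) sets_vimage_algebra2) auto
    have "fst -` B \<inter> space borel \<in> sets (borel :: ('x \<times> 'z) measure)"
      by (rule measurable_sets[OF _ B(1)]) (rule fst_borel)
    then have "fst -` (fst -` B) \<inter> UNIV \<in> sets (sigma_XZ :: (('x \<times> 'z) \<times> real) measure)"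
      unfolding sigma_XZ_def by (subst sets_vimage_algebra2) auto
    then show "S \<in> sets sigma_XZ" using B by (simp add: vimage_def)
  qed
  show "space sigma_X = space (sigma_XZ :: (('x \<times> 'z) \<times> real) measure)"
    by (simp add: sigma_X_def sigma_XZ_def)
qed

lemma sub_X:
  fixes M :: "(('x::euclidean_space \<times> 'z::euclidean_space) \<times> real) measure"
  assumes "sets M = sets borel" shows "subalgebra M sigma_X"
  using sub_XZ[OF assms] sub_X_XZ unfolding subalgebra_def by auto

lemma meas_XZ:
  fixes M :: "(('x::euclidean_space \<times> 'z::euclidean_space) \<times> real) measure"
  assumes "sets M = sets borel" "u \<in> borel_measurable sigma_XZ"
  shows "u \<in> borel_measurable M"
  by (rule measurable_from_subalg[OF sub_XZ[OF assms(1)] assms(2)])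

lemma fst_meas_XZ:
  assumes "g \<in> borel_measurable borel"
  shows "(\<lambda>w. g (fst w)) \<in> borel_measurable (sigma_XZ :: (('x::euclidean_space \<times> 'z::euclidean_space) \<times> real) measure)"
proof -
  have "fst \<in> (sigma_XZ :: (('x \<times> 'z) \<times> real) measure) \<rightarrow>\<^sub>M borel"
    unfolding sigma_XZ_def by (rule measurable_vimage_algebra1) auto
  from measurable_comp[OF this assms] show ?thesis by (simp add: comp_def)
qed

lemma fms:
  fixes M :: "'a measure"
  assumes pM: "prob_space M" and s: "subalgebra M F"
  shows "finite_measure_subalgebra M F"
proof -
  interpret prob_space M by (rule pM)
  show ?thesis by (intro finite_measure_subalgebra.intro finite_measure_subalgebra_axioms.intro s) unfold_locales
qed

lemma transfer:
  fixes M M' :: "(('x::euclidean_space \<times> 'z::euclidean_space) \<times> real) measure"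
    and u u' :: "(('x \<times> 'z) \<times> real) \<Rightarrow> real"
  assumes sM: "sets M = sets borel" and sM': "sets M' = sets borel"
    and ac: "absolutely_continuous (marg_XZ M) (marg_XZ M')"
    and u[measurable]: "u \<in> borel_measurable sigma_XZ" and u'[measurable]: "u' \<in> borel_measurable sigma_XZ"
    and ae: "AE w in M. u w = u' w"
  shows "AE w in M'. u w = u' w"
proof -
  have "space sigma_XZ - {w \<in> space sigma_XZ. u w = u' w} \<in> sets (sigma_XZ :: (('x \<times> 'z) \<times> real) measure)"
    using measurable_equality_set[OF u u'] by (rule sets.compl_sets)
  moreover have "space sigma_XZ - {w \<in> space sigma_XZ. u w = u' w} = {w. u w \<noteq> u' w}"
    by (auto simp: sigma_XZ_def)
  ultimately have "{w. u w \<noteq> u' w} \<in> sets (sigma_XZ :: (('x \<times> 'z) \<times> real) measure)" by simp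
  then obtain B where B: "B \<in> sets borel" "{w. u w \<noteq> u' w} = fst -` B"
    using sets_XZ by blast
  have fm: "fst \<in> M \<rightarrow>\<^sub>M (borel :: ('x \<times> 'z) measure)" by (subst measurable_cong_sets[OF sM refl]) (rule fst_borel)
  have fm': "fst \<in> M' \<rightarrow>\<^sub>M (borel :: ('x \<times> 'z) measure)" by (subst measurable_cong_sets[OF sM' refl]) (rule fst_borel)
  have Bs: "{x \<in> space borel. x \<notin> B} \<in> sets (borel :: ('x \<times> 'z) measure)" using B(1) by auto
  have "AE w in M. fst w \<notin> B" using ae by eventually_elim (use B(2) in auto)
  then have "AE v in marg_XZ M. v \<notin> B" unfolding marg_XZ_def using AE_distr_iff[OF fm Bs] by simp
  then have "AE v in marg_XZ M'. v \<notin> B"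
    by (rule absolutely_continuous_AE[rotated, OF ac]) (simp add: marg_XZ_def)
  then have "AE w in M'. fst w \<notin> B" unfolding marg_XZ_def using AE_distr_iff[OF fm' Bs] by simp
  then show ?thesis by eventually_elim (use B(2) in auto)
qed

lemma C:
  fixes M :: "(('x::euclidean_space \<times> 'z::euclidean_space) \<times> real) measure"
  assumes V: "valid_regime M" and K: "K \<in> borel \<rightarrow>\<^sub>M prob_algebra borel" and MK: "M = compose_kernel M K"
  shows "integrable (marg_XZ M) (\<lambda>v. \<integral>y. y \<partial>K v)" "EY M = (\<integral>v. \<integral>y. y \<partial>K v \<partial>marg_XZ M)"
    "AE w in M. CE_Y_XZ M w = (\<integral>y. y \<partial>K (fst w))"
proof -
  have MK': "M = distr M borel fst \<bind> (\<lambda>v. K v \<bind> (\<lambda>y. return borel (v,y)))"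
    using MK unfolding compose_kernel_def marg_XZ_def .
  have pM: "prob_space M" and sM: "sets M = sets borel" and iM: "integrable M snd"
    using V unfolding valid_regime_def by auto
  define g where "g v = (\<integral>y. y \<partial>K v)" for v
  have gm: "g \<in> borel_measurable borel"
  proof -
    have "(\<lambda>v. \<integral>y. id y \<partial>K v) \<in> borel_measurable borel"
      by (rule measurable_compose[OF measurable_prob_algebraD[OF K] integral_measurable_subprob_algebra]) simp
    then show ?thesis by (simp add: g_def[abs_def])
  qed
  have snd_m: "snd \<in> borel_measurable (borel :: (('x \<times> 'z) \<times> real) measure)" by (rule snd_borel)
  show gi: "integrable (marg_XZ M) (\<lambda>v. \<integral>y. y \<partial>K v)"
    using bo_fub(1)[OF K MK' snd_m iM] by (simp add: marg_XZ_def)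
  show "EY M = (\<integral>v. \<integral>y. y \<partial>K v \<partial>marg_XZ M)"
    using bo_fub(2)[OF K MK' snd_m iM] by (simp add: marg_XZ_def EY_def)
  have fm: "fst \<in> M \<rightarrow>\<^sub>M (borel :: ('x \<times> 'z) measure)" by (subst measurable_cong_sets[OF sM refl]) (rule fst_borel)
  interpret finite_measure_subalgebra M sigma_XZ
    by (rule fms[OF pM sub_XZ[OF sM]])
  have gfi: "integrable M (\<lambda>w. g (fst w))"
    using gi integrable_distr_eq[OF fm gm] by (simp add: marg_XZ_def g_def[abs_def])
  have "AE w in M. real_cond_exp M sigma_XZ snd w = g (fst w)"
  proof (rule real_cond_exp_charact)
    fix A assume "A \<in> sets (sigma_XZ :: (('x \<times> 'z) \<times> real) measure)"
    then obtain B where B: "B \<in> sets borel" "A = fst -` B" using sets_XZ by blast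
    have fB: "(\<lambda>w. indicator B (fst w) * snd w) \<in> borel_measurable (borel :: (('x \<times> 'z) \<times> real) measure)"
      using B(1) fst_borel snd_borel by measurable
    have iB: "integrable M (\<lambda>w. indicator B (fst w) * snd w)"
    proof -
      have "fst -` B \<inter> space M \<in> sets M" using B(1) fm by measurable
      from integrable_mult_indicator[OF this iM] show ?thesis
        by (simp add: indicator_def space_borel_M[OF sM])
    qed
    have "(\<integral>x\<in>A. snd x \<partial>M) = (\<integral>x. indicator B (fst x) * snd x \<partial>M)"
      unfolding set_lebesgue_integral_def B(2) by (simp add: indicator_def)
    also have "\<dots> = (\<integral>v. \<integral>y. indicator B v * y \<partial>K v \<partial>marg_XZ M)"
      using bo_fub(2)[OF K MK' fB iB] by (simp add: marg_XZ_def)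
    also have "\<dots> = (\<integral>v. indicator B v * g v \<partial>marg_XZ M)"
      by (simp add: g_def)
    also have "\<dots> = (\<integral>x. indicator B (fst x) * g (fst x) \<partial>M)"
      unfolding marg_XZ_def by (rule integral_distr[OF fm]) (use B(1) gm in measurable)
    also have "\<dots> = (\<integral>x\<in>A. g (fst x) \<partial>M)"
      unfolding set_lebesgue_integral_def B(2) by (simp add: indicator_def)
    finally show "(\<integral>x\<in>A. snd x \<partial>M) = (\<integral>x\<in>A. g (fst x) \<partial>M)" .
  next
    show "integrable M snd" by (rule iM)
    show "integrable M (\<lambda>w. g (fst w))" by (rule gfi)
    show "(\<lambda>w. g (fst w)) \<in> borel_measurable sigma_XZ" by (rule fst_meas_XZ[OF gm])
  qed
  then show "AE w in M. CE_Y_XZ M w = (\<integral>y. y \<partial>K (fst w))" by (simp add: CE_Y_XZ_def g_def)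
qed




lemma G:
  fixes M M' N :: "(('x::euclidean_space \<times> 'z::euclidean_space) \<times> real) measure"
  assumes VM: "valid_regime M" and KM: "M = compose_kernel M K"
    and VM': "valid_regime M'" and KM': "M' = compose_kernel M' K"
    and K: "K \<in> borel \<rightarrow>\<^sub>M prob_algebra borel"
    and sN: "sets N = sets borel" and ac: "absolutely_continuous (marg_XZ M) (marg_XZ N)"
    and mN: "marg_XZ N = marg_XZ M'"
  shows "integrable N (CE_Y_XZ M)" "(\<integral>w. CE_Y_XZ M w \<partial>N) = EY M'"
proof -
  define g where "g v = (\<integral>y. y \<partial>K v)" for v
  have gm: "g \<in> borel_measurable borel"
  proof -
    have "(\<lambda>v. \<integral>y. id y \<partial>K v) \<in> borel_measurable borel"
      by (rule measurable_compose[OF measurable_prob_algebraD[OF K] integral_measurable_subprob_algebra]) simp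
    then show ?thesis by (simp add: g_def[abs_def])
  qed
  have sM: "sets M = sets borel" using VM by (simp add: valid_regime_def)
  have ae1: "AE w in M. CE_Y_XZ M w = g (fst w)" using C(3)[OF VM K KM] by (simp add: g_def)
  have cem: "CE_Y_XZ M \<in> borel_measurable sigma_XZ" unfolding CE_Y_XZ_def by (rule borel_measurable_cond_exp)
  have aeN: "AE w in N. CE_Y_XZ M w = g (fst w)"
    by (rule transfer[OF sM sN ac cem fst_meas_XZ[OF gm] ae1])
  have fmN: "fst \<in> N \<rightarrow>\<^sub>M (borel :: ('x \<times> 'z) measure)" by (subst measurable_cong_sets[OF sN refl]) (rule fst_borel)
  have gi: "integrable (marg_XZ M') g" using C(1)[OF VM' K KM'] by (simp add: g_def[abs_def])
  then have gi': "integrable N (\<lambda>w. g (fst w))"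
    using integrable_distr_eq[OF fmN gm] mN by (simp add: marg_XZ_def)
  have m1: "CE_Y_XZ M \<in> borel_measurable N" by (rule meas_XZ[OF sN cem])
  have m2: "(\<lambda>w. g (fst w)) \<in> borel_measurable N" by (rule meas_XZ[OF sN fst_meas_XZ[OF gm]])
  show "integrable N (CE_Y_XZ M)"
    by (rule integrable_cong_AE_imp[OF gi' m1]) (use aeN in auto)
  have "(\<integral>w. CE_Y_XZ M w \<partial>N) = (\<integral>w. g (fst w) \<partial>N)"
    by (rule integral_cong_AE[OF m1 m2 aeN])
  also have "\<dots> = (\<integral>v. g v \<partial>marg_XZ N)"
    unfolding marg_XZ_def by (rule integral_distr[OF fmN gm, symmetric])
  also have "\<dots> = EY M'" using C(2)[OF VM' K KM'] mN by (simp add: g_def[abs_def])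
  finally show "(\<integral>w. CE_Y_XZ M w \<partial>N) = EY M'" .
qed

lemma reg:
  assumes "in_subclass P0 P1"
  obtains K where "K \<in> borel \<rightarrow>\<^sub>M prob_algebra borel" "\<And>r. valid_regime (regime P0 P1 r)"
    "\<And>r. regime P0 P1 r = compose_kernel (regime P0 P1 r) K"
    "\<And>r r'. absolutely_continuous (marg_XZ (regime P0 P1 r')) (marg_XZ (regime P0 P1 r))"
  using assms unfolding in_subclass_def trans_CI_def XZ_abs_cont_def by blast

lemma regN[simp]: "regime P0 P1 None = P0" and regS[simp]: "regime P0 P1 (Some t) = P1 t"
  by (simp_all add: regime_def)

lemma Greg:
  fixes P0 :: "(('x::euclidean_space \<times> 'z::euclidean_space) \<times> real) measure"
  assumes S: "in_subclass P0 P1" and sN: "sets N = sets borel"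
    and ac: "absolutely_continuous (marg_XZ (regime P0 P1 r)) (marg_XZ N)"
    and mN: "marg_XZ N = marg_XZ (regime P0 P1 r')"
  shows "integrable N (CE_Y_XZ (regime P0 P1 r))" "(\<integral>w. CE_Y_XZ (regime P0 P1 r) w \<partial>N) = EY (regime P0 P1 r')"
proof -
  obtain K where K: "K \<in> borel \<rightarrow>\<^sub>M prob_algebra borel" "\<And>r. valid_regime (regime P0 P1 r)"
    "\<And>r. regime P0 P1 r = compose_kernel (regime P0 P1 r) K" using reg[OF S] by metis
  show "integrable N (CE_Y_XZ (regime P0 P1 r))" "(\<integral>w. CE_Y_XZ (regime P0 P1 r) w \<partial>N) = EY (regime P0 P1 r')"
    using G[OF K(2) K(3) K(2) K(3) K(1) sN ac mN] by auto
qed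

lemma Lreg:
  fixes P0 :: "(('x::euclidean_space \<times> 'z::euclidean_space) \<times> real) measure"
  assumes S: "in_subclass P0 P1"
  shows "integrable (regime P0 P1 r') (CE_Y_XZ (regime P0 P1 r))" "(\<integral>w. CE_Y_XZ (regime P0 P1 r) w \<partial>regime P0 P1 r') = EY (regime P0 P1 r')"
proof -
  obtain K where K: "K \<in> borel \<rightarrow>\<^sub>M prob_algebra borel" "\<And>r. valid_regime (regime P0 P1 r)"
    "\<And>r. regime P0 P1 r = compose_kernel (regime P0 P1 r) K"
    "\<And>r r'. absolutely_continuous (marg_XZ (regime P0 P1 r')) (marg_XZ (regime P0 P1 r))" using reg[OF S] by metis
  have "sets (regime P0 P1 r') = sets borel" using K(2) by (simp add: valid_regime_def)
  from Greg[OF S this K(4) refl] show "integrable (regime P0 P1 r') (CE_Y_XZ (regime P0 P1 r))" "(\<integral>w. CE_Y_XZ (regime P0 P1 r) w \<partial>regime P0 P1 r') = EY (regime P0 P1 r')"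
    by auto
qed




lemma int_eq:
  fixes M M' :: "(('x::euclidean_space \<times> 'z::euclidean_space) \<times> real) measure"
    and u :: "(('x \<times> 'z) \<times> real) \<Rightarrow> real"
  assumes sM: "sets M = sets borel" and sM': "sets M' = sets borel" and mm: "marg_XZ M = marg_XZ M'"
    and u: "u \<in> borel_measurable sigma_XZ" and i: "integrable M u"
  shows "integrable M' u" "(\<integral>w. u w \<partial>M) = (\<integral>w. u w \<partial>M')"
proof -
  have R: "restr_to_subalg M sigma_XZ = restr_to_subalg M' sigma_XZ"
  proof (rule measure_eqI)
    show "sets (restr_to_subalg M sigma_XZ) = sets (restr_to_subalg M' sigma_XZ)"
      by (simp add: sets_restr_to_subalg[OF sub_XZ[OF sM]] sets_restr_to_subalg[OF sub_XZ[OF sM']])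
    fix A assume "A \<in> sets (restr_to_subalg M sigma_XZ)"
    then have A: "A \<in> sets (sigma_XZ :: (('x \<times> 'z) \<times> real) measure)" by (simp add: sets_restr_to_subalg[OF sub_XZ[OF sM]])
    then obtain B where B: "B \<in> sets borel" "A = fst -` B" using sets_XZ by blast
    have fm: "fst \<in> M \<rightarrow>\<^sub>M (borel :: ('x \<times> 'z) measure)" by (subst measurable_cong_sets[OF sM refl]) (rule fst_borel)
    have fm': "fst \<in> M' \<rightarrow>\<^sub>M (borel :: ('x \<times> 'z) measure)" by (subst measurable_cong_sets[OF sM' refl]) (rule fst_borel)
    have "emeasure (restr_to_subalg M sigma_XZ) A = emeasure M (fst -` B \<inter> space M)"
      using emeasure_restr_to_subalg[OF sub_XZ[OF sM] A] B(2) space_borel_M[OF sM] by simp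
    also have "\<dots> = emeasure (marg_XZ M) B" unfolding marg_XZ_def by (rule emeasure_distr[OF fm B(1), symmetric])
    also have "\<dots> = emeasure (marg_XZ M') B" by (simp add: mm)
    also have "\<dots> = emeasure M' (fst -` B \<inter> space M')" unfolding marg_XZ_def by (rule emeasure_distr[OF fm' B(1)])
    also have "\<dots> = emeasure (restr_to_subalg M' sigma_XZ) A"
      using emeasure_restr_to_subalg[OF sub_XZ[OF sM'] A] B(2) space_borel_M[OF sM'] by simp
    finally show "emeasure (restr_to_subalg M sigma_XZ) A = emeasure (restr_to_subalg M' sigma_XZ) A" .
  qed
  have "integrable (restr_to_subalg M sigma_XZ) u" by (rule integrable_in_subalg[OF sub_XZ[OF sM] u i])
  then show "integrable M' u" unfolding R by (rule integrable_from_subalg[OF sub_XZ[OF sM']])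
  show "(\<integral>w. u w \<partial>M) = (\<integral>w. u w \<partial>M')"
    using integral_subalgebra2[OF sub_XZ[OF sM] u] integral_subalgebra2[OF sub_XZ[OF sM'] u] R by simp
qed

lemma X_to_XZ: "f \<in> borel_measurable (sigma_X :: (('x::euclidean_space \<times> 'z::euclidean_space) \<times> real) measure) \<Longrightarrow> f \<in> borel_measurable sigma_XZ"
  by (rule measurable_from_subalg[OF sub_X_XZ])

lemma T3gen:
  fixes P0 :: "(('x::euclidean_space \<times> 'z::euclidean_space) \<times> real) measure"
  assumes S: "in_subclass P0 P1"
  shows "AE w in P0. CE_X P0 snd w = CE_X P0 (CE_Y_XZ (P1 th)) w"
proof -
  obtain K where K: "K \<in> borel \<rightarrow>\<^sub>M prob_algebra borel" "\<And>r. valid_regime (regime P0 P1 r)"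
    "\<And>r. regime P0 P1 r = compose_kernel (regime P0 P1 r) K"
    "\<And>r r'. absolutely_continuous (marg_XZ (regime P0 P1 r')) (marg_XZ (regime P0 P1 r))" using reg[OF S] by metis
  have V0: "valid_regime P0" and K0: "P0 = compose_kernel P0 K" using K(2)[of None] K(3)[of None] by simp_all
  have V1: "valid_regime (P1 th)" and K1: "P1 th = compose_kernel (P1 th) K" using K(2)[of "Some th"] K(3)[of "Some th"] by simp_all
  have ac: "absolutely_continuous (marg_XZ (P1 th)) (marg_XZ P0)" using K(4)[of "Some th" None] by simp
  have sP0: "sets P0 = sets borel" and pP0: "prob_space P0" and iP0: "integrable P0 snd" using V0 by (auto simp: valid_regime_def)
  have sP1: "sets (P1 th) = sets borel" using V1 by (simp add: valid_regime_def)
  interpret finite_measure_subalgebra P0 sigma_X by (rule fms[OF pP0 sub_X[OF sP0]])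
  have n: "AE w in P0. real_cond_exp P0 sigma_X (real_cond_exp P0 sigma_XZ snd) w = real_cond_exp P0 sigma_X snd w"
    by (rule real_cond_exp_nested_subalg[OF sub_XZ[OF sP0] sub_X_XZ iP0])
  define g where "g v = (\<integral>y. y \<partial>K v)" for v
  have gm: "g \<in> borel_measurable borel"
  proof -
    have "(\<lambda>v. \<integral>y. id y \<partial>K v) \<in> borel_measurable borel"
      by (rule measurable_compose[OF measurable_prob_algebraD[OF K(1)] integral_measurable_subprob_algebra]) simp
    then show ?thesis by (simp add: g_def[abs_def])
  qed
  have cem: "\<And>M. CE_Y_XZ M \<in> borel_measurable sigma_XZ" unfolding CE_Y_XZ_def by (rule borel_measurable_cond_exp)
  have a0: "AE w in P0. CE_Y_XZ P0 w = g (fst w)" using C(3)[OF V0 K(1) K0] by (simp add: g_def)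
  have a1: "AE w in P1 th. CE_Y_XZ (P1 th) w = g (fst w)" using C(3)[OF V1 K(1) K1] by (simp add: g_def)
  have a1': "AE w in P0. CE_Y_XZ (P1 th) w = g (fst w)"
    by (rule transfer[OF sP1 sP0 ac cem fst_meas_XZ[OF gm] a1])
  have a: "AE w in P0. CE_Y_XZ P0 w = CE_Y_XZ (P1 th) w" using a0 a1' by eventually_elim simp
  have c: "AE w in P0. real_cond_exp P0 sigma_X (CE_Y_XZ P0) w = real_cond_exp P0 sigma_X (CE_Y_XZ (P1 th)) w"
    by (rule real_cond_exp_cong[OF a meas_XZ[OF sP0 cem] meas_XZ[OF sP0 cem]])
  show ?thesis using n c unfolding CE_X_def CE_Y_XZ_def by eventually_elim simp
qed




lemma subF:
  fixes Q0 :: "(('x::euclidean_space \<times> 'z::euclidean_space) \<times> real) measure"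
  assumes "in_subclass Q0 Q1"
  shows "sets Q0 = sets borel" "sets (Q1 t) = sets borel"
    "absolutely_continuous (marg_XZ Q0) (marg_XZ (Q1 t))"
    "absolutely_continuous (marg_XZ (Q1 t)) (marg_XZ Q0)"
    "absolutely_continuous (marg_XZ (Q1 t')) (marg_XZ (Q1 t))"
    "absolutely_continuous (marg_XZ Q0) (marg_XZ Q0)"
proof -
  obtain K where K: "K \<in> borel \<rightarrow>\<^sub>M prob_algebra borel" "\<And>r. valid_regime (regime Q0 Q1 r)"
    "\<And>r. regime Q0 Q1 r = compose_kernel (regime Q0 Q1 r) K"
    "\<And>r r'. absolutely_continuous (marg_XZ (regime Q0 Q1 r')) (marg_XZ (regime Q0 Q1 r))" using reg[OF assms] by metis
  show "absolutely_continuous (marg_XZ Q0) (marg_XZ Q0)" using K(4)[of None None] by simp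
  show "sets Q0 = sets borel" "sets (Q1 t) = sets borel"
    using K(2)[of None] K(2)[of "Some t"] by (simp_all add: valid_regime_def)
  show "absolutely_continuous (marg_XZ Q0) (marg_XZ (Q1 t))"
    "absolutely_continuous (marg_XZ (Q1 t)) (marg_XZ Q0)"
    "absolutely_continuous (marg_XZ (Q1 t')) (marg_XZ (Q1 t))"
    using K(4)[of "Some t" None] K(4)[of None "Some t"] K(4)[of "Some t" "Some t'"] K(4)[of "Some t'" "Some t"] by simp_all
qed

theorem corollary1:
  fixes P0 :: "(('x::euclidean_space \<times> 'z::euclidean_space) \<times> real) measure"
    and P1 :: "'p \<Rightarrow> (('x \<times> 'z) \<times> real) measure"
    and th th_t th_t1 :: 'p
  assumes "in_subclass P0 P1"
  shows
    \<comment> \<open>(T1), first identification\<close>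
    "deploy_effect P0 P1 th = (\<integral>w. CE_Y_XZ P0 w \<partial>(P1 th)) - EY P0
     \<and> (\<forall>Q0 Q1. in_subclass Q0 Q1 \<longrightarrow> Q0 = P0 \<longrightarrow> marg_XZ (Q1 th) = marg_XZ (P1 th)
          \<longrightarrow> deploy_effect Q0 Q1 th = deploy_effect P0 P1 th)
     \<comment> \<open>(T1), second identification\<close>
     \<and> deploy_effect P0 P1 th = EY (P1 th) - (\<integral>w. CE_Y_XZ (P1 th) w \<partial>P0)
     \<and> (\<forall>Q0 Q1. in_subclass Q0 Q1 \<longrightarrow> Q1 th = P1 th \<longrightarrow> marg_XZ Q0 = marg_XZ P0
          \<longrightarrow> deploy_effect Q0 Q1 th = deploy_effect P0 P1 th)
     \<comment> \<open>(T2)\<close>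
     \<and> retrain_effect P1 th_t1 th_t = (\<integral>w. CE_Y_XZ (P1 th_t) w \<partial>(P1 th_t1)) - EY (P1 th_t)
     \<and> (\<forall>Q0 Q1. in_subclass Q0 Q1 \<longrightarrow> Q1 th_t = P1 th_t \<longrightarrow> marg_XZ (Q1 th_t1) = marg_XZ (P1 th_t1)
          \<longrightarrow> retrain_effect Q1 th_t1 th_t = retrain_effect P1 th_t1 th_t)
     \<comment> \<open>(T3)\<close>
     \<and> (AE w in P0. CE_X P0 snd w = CE_X P0 (CE_Y_XZ (P1 th)) w)
     \<and> (\<forall>Q0 Q1. in_subclass Q0 Q1 \<longrightarrow> Q1 th = P1 th \<longrightarrow> marg_XZ Q0 = marg_XZ P0
          \<longrightarrow> (AE w in P0. CE_X Q0 snd w = CE_X P0 snd w))"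
proof (intro conjI allI impI)
  note S = assms
  have L: "\<And>r r'. (\<integral>w. CE_Y_XZ (regime P0 P1 r) w \<partial>regime P0 P1 r') = EY (regime P0 P1 r')"
    using Lreg(2)[OF assms] by blast
  have L01: "(\<integral>w. CE_Y_XZ P0 w \<partial>(P1 th)) = EY (P1 th)" using L[of None "Some th"] L[of "Some th" None] by simp
  have L10: "(\<integral>w. CE_Y_XZ (P1 th) w \<partial>P0) = EY P0" using L[of None "Some th"] L[of "Some th" None] by simp
  have L11: "(\<integral>w. CE_Y_XZ (P1 th_t) w \<partial>(P1 th_t1)) = EY (P1 th_t1)" using L[of "Some th_t" "Some th_t1"] L[of "Some th_t1" "Some th_t"] by simp
  show "deploy_effect P0 P1 th = (\<integral>w. CE_Y_XZ P0 w \<partial>(P1 th)) - EY P0"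
    using L01 by (simp add: deploy_effect_def)
  show "deploy_effect P0 P1 th = EY (P1 th) - (\<integral>w. CE_Y_XZ (P1 th) w \<partial>P0)"
    using L10 by (simp add: deploy_effect_def)
  show "retrain_effect P1 th_t1 th_t = (\<integral>w. CE_Y_XZ (P1 th_t) w \<partial>(P1 th_t1)) - EY (P1 th_t)"
    using L11 by (simp add: retrain_effect_def)
  show "AE w in P0. CE_X P0 snd w = CE_X P0 (CE_Y_XZ (P1 th)) w" by (rule T3gen[OF assms])
next
  fix Q0 Q1 assume SQ: "in_subclass Q0 Q1" and e: "Q0 = P0" and m: "marg_XZ (Q1 th) = marg_XZ (P1 th)"
  have "EY (Q1 th) = (\<integral>w. CE_Y_XZ Q0 w \<partial>(Q1 th))" using Lreg(2)[OF SQ, of None "Some th"] Lreg(2)[OF SQ, of "Some th" None] by simp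
  also have "\<dots> = EY (P1 th)"
    using Greg(2)[OF assms subF(2)[OF SQ, of th], of None "Some th"] Greg(2)[OF assms subF(2)[OF SQ, of th], of "Some th" None] subF(3)[OF SQ, of th] e m by simp
  finally show "deploy_effect Q0 Q1 th = deploy_effect P0 P1 th" using e by (simp add: deploy_effect_def)
next
  fix Q0 Q1 assume SQ: "in_subclass Q0 Q1" and e: "Q1 th = P1 th" and m: "marg_XZ Q0 = marg_XZ P0"
  have "EY Q0 = (\<integral>w. CE_Y_XZ (Q1 th) w \<partial>Q0)" using Lreg(2)[OF SQ, of "Some th" None] Lreg(2)[OF SQ, of None "Some th"] by simp
  also have "\<dots> = EY P0"
    using Greg(2)[OF assms subF(1)[OF SQ], of "Some th" None] Greg(2)[OF assms subF(1)[OF SQ], of None "Some th"] subF(4)[OF SQ, of th] e m by simp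
  finally show "deploy_effect Q0 Q1 th = deploy_effect P0 P1 th" using e by (simp add: deploy_effect_def)
next
  fix Q0 Q1 assume SQ: "in_subclass Q0 Q1" and e: "Q1 th_t = P1 th_t" and m: "marg_XZ (Q1 th_t1) = marg_XZ (P1 th_t1)"
  have "EY (Q1 th_t1) = (\<integral>w. CE_Y_XZ (Q1 th_t) w \<partial>(Q1 th_t1))" using Lreg(2)[OF SQ, of "Some th_t" "Some th_t1"] Lreg(2)[OF SQ, of "Some th_t1" "Some th_t"] by simp
  also have "\<dots> = EY (P1 th_t1)"
    using Greg(2)[OF assms subF(2)[OF SQ, of th_t1], of "Some th_t" "Some th_t1"] Greg(2)[OF assms subF(2)[OF SQ, of th_t1], of "Some th_t1" "Some th_t"] subF(5)[OF SQ, of th_t th_t1] e m by simp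
  finally show "retrain_effect Q1 th_t1 th_t = retrain_effect P1 th_t1 th_t" using e by (simp add: retrain_effect_def)
next
  fix Q0 Q1 assume SQ: "in_subclass Q0 Q1" and e: "Q1 th = P1 th" and m: "marg_XZ Q0 = marg_XZ P0"
  show "AE w in P0. CE_X Q0 snd w = CE_X P0 snd w"
  proof -
    define f where "f = CE_Y_XZ (P1 th)"
    have sP0: "sets P0 = sets borel" using subF(1)[OF assms] .
    have sQ0: "sets Q0 = sets borel" using subF(1)[OF SQ] .
    have pP0: "prob_space P0" and pQ0: "prob_space Q0"
      using reg[OF assms] reg[OF SQ] by (metis regN valid_regime_def)+
    have m': "marg_XZ P0 = marg_XZ Q0" using m by simp
    have acQ: "absolutely_continuous (marg_XZ Q0) (marg_XZ P0)" using subF(6)[OF SQ] m by simp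
    have fXZ[measurable]: "f \<in> borel_measurable sigma_XZ" unfolding f_def CE_Y_XZ_def by (rule borel_measurable_cond_exp)
    have fi: "integrable P0 f" unfolding f_def
      using Lreg(1)[OF assms, of "Some th" None] Lreg(1)[OF assms, of None "Some th"] by simp
    have fiQ: "integrable Q0 f" by (rule int_eq(1)[OF sP0 sQ0 m' fXZ fi])
    interpret P: finite_measure_subalgebra P0 sigma_X by (rule fms[OF pP0 sub_X[OF sP0]])
    interpret Q: finite_measure_subalgebra Q0 sigma_X by (rule fms[OF pQ0 sub_X[OF sQ0]])
    define h where "h = real_cond_exp Q0 sigma_X f"
    have hX[measurable]: "h \<in> borel_measurable sigma_X" unfolding h_def by (rule borel_measurable_cond_exp)
    have hXZ[measurable]: "h \<in> borel_measurable sigma_XZ" by (rule X_to_XZ[OF hX])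
    have hiQ: "integrable Q0 h" unfolding h_def by (rule Q.real_cond_exp_int(1)[OF fiQ])
    have hi: "integrable P0 h" by (rule int_eq(1)[OF sQ0 sP0 m hXZ hiQ])
    have c: "AE w in P0. real_cond_exp P0 sigma_X f w = h w"
    proof (rule P.real_cond_exp_charact)
      fix A assume AX: "A \<in> sets (sigma_X :: (('x \<times> 'z) \<times> real) measure)"
      then have A[measurable]: "A \<in> sets (sigma_XZ :: (('x \<times> 'z) \<times> real) measure)"
        using sub_X_XZ unfolding subalgebra_def by blast
      have AP: "A \<in> sets P0" using A sub_XZ[OF sP0] unfolding subalgebra_def by blast
      have AQ: "A \<in> sets Q0" using A sub_XZ[OF sQ0] unfolding subalgebra_def by blast
      have m1: "(\<lambda>x. indicator A x *\<^sub>R f x) \<in> borel_measurable sigma_XZ" by measurable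
      have m2: "(\<lambda>x. indicator A x *\<^sub>R h x) \<in> borel_measurable sigma_XZ" by measurable
      have "(\<integral>x\<in>A. f x \<partial>P0) = (\<integral>x\<in>A. f x \<partial>Q0)"
        unfolding set_lebesgue_integral_def
        by (rule int_eq(2)[OF sP0 sQ0 m' m1 integrable_mult_indicator[OF AP fi]])
      also have "\<dots> = (\<integral>x\<in>A. h x \<partial>Q0)" unfolding h_def by (rule Q.real_cond_exp_intA[OF fiQ AX])
      also have "\<dots> = (\<integral>x\<in>A. h x \<partial>P0)"
        unfolding set_lebesgue_integral_def
        by (rule int_eq(2)[OF sQ0 sP0 m m2 integrable_mult_indicator[OF AQ hiQ]])
      finally show "(\<integral>x\<in>A. f x \<partial>P0) = (\<integral>x\<in>A. h x \<partial>P0)" .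
    qed (use fi hi hX in auto)
    have a: "AE w in Q0. CE_X Q0 snd w = CE_X Q0 f w" using T3gen[OF SQ, of th] e by (simp add: f_def)
    have u1: "CE_X Q0 snd \<in> borel_measurable sigma_XZ" unfolding CE_X_def by (rule X_to_XZ[OF borel_measurable_cond_exp])
    have u2: "CE_X Q0 f \<in> borel_measurable sigma_XZ" unfolding CE_X_def by (rule X_to_XZ[OF borel_measurable_cond_exp])
    have a': "AE w in P0. CE_X Q0 snd w = CE_X Q0 f w" by (rule transfer[OF sQ0 sP0 acQ u1 u2 a])
    have b: "AE w in P0. CE_X P0 snd w = CE_X P0 f w" using T3gen[OF assms, of th] by (simp add: f_def)
    show ?thesis using a' b c unfolding CE_X_def h_def by eventually_elim simp
  qed
qed


end
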